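(* Assume $a\le p/2$. Define $$k_*=\begin{cases}p/2-\lfloor -a\rfloor,& p\text{ even},\\ (p+1)/2+\lfloor a\rfloor,& p\text{ odd and }a-\lfloor a\rfloor\le 1/2,\\ (p+1)/2+\lfloor a\rfloor+1,& p\text{ odd and }a-\lfloor a\rfloor>1/2.\end{cases}$$ Then $k_*\in\{1,\dots,p\}$. For $\tilde\lambda^2\in(0,\infty)^p$ let $\tilde\lambda^2_{(1)}\le\dots\le\tilde\lambda^2_{(p)}$ be its order statistics and $\tilde\lambda^2_*=\tilde\lambda^2_{(k_* )}$. Let $B_*=k_*$ and $$A_*=\begin{cases}a+\lfloor -a\rfloor+1,& p\text{ even},\\ 1/2+a-\lfloor a\rfloor,& p\text{ odd and }a-\lfloor a\rfloor\le1/2,\\ a-\lfloor a\rfloor-1/2,& p\text{ odd and }a-\lfloor a\rfloor>1/2.\end{cases}$$ (i) For all $\varepsilon>0$ and all $\tilde\lambda^2\in(0,\infty)^p$, $$E\big[(\tau^2)^{-\varepsilon}\mid\tilde\lambda^2\big]\le\frac{\int_0^\infty t^{-\varepsilon}\,t^{A_*-1}(c+t)^{-(a+b)}(\tilde\lambda^2_*+t)^{-(A_*+p/2-a)}dt}{\int_0^\infty t^{A_*-1}(c+t)^{-(a+b)}(\tilde\lambda^2_*+t)^{-(A_*+p/2-a)}dt}.$$ (ii) For all $\gamma>0$ and all $\tilde\lambda^2\in(0,\infty)^p$, $$E\Big[\frac{\tau^2}{\gamma+\tau^2}\,\Big|\,\tilde\lambda^2\Big]\le\frac{\int_0^\infty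 \frac{t}{\gamma+t}\,t^{p/2+a-1}(c+t)^{-(a+b)}(\tilde\lambda^2_*+t)^{-B_*}dt}{\int_0^\infty t^{p/2+a-1}(c+t)^{-(a+b)}(\tilde\lambda^2_*+t)^{-B_*}dt}.$$ (iii) Assume moreover $a\notin\mathbb N$ if $p$ is even and $a\notin\mathbb N-1/2$ if $p$ is odd. Then for all $\gamma>0$ and $\eta>0$ there exists $\delta>0$ such that for all $\tilde\lambda^2\in(0,\infty)^p$ with $\tilde\lambda^2_*<\delta$, $0\le E[\tau^2/(\gamma+\tau^2)\mid\tilde\lambda^2]<\eta$.
   Context: Let $p\ge1$ and $a,b,c>0$, and let $\pi_\tau(t)=t^{a-1}(c+t)^{-(a+b)}/C(a,b,c)$ for $t>0$, where $C(a,b,c)=\int_0^\infty t^{a-1}(c+t)^{-(a+b)}\,dt$. For $\tilde\lambda^2\in(0,\infty)^p$, $E[\,\cdot\mid\tilde\lambda^2]$ denotes expectation with respect to $\tau^2$ having the density on $(0,\infty)$ proportional to $t\mapsto\pi_\tau(t)\prod_{k=1}^pt^{1/2}/(\tilde\lambda_k^2+t)$. $\lfloor x\rfloor$ is the greatest integer $\le x$; $\mathbb N=\{1,2,\dots\}$ and $\mathbb N-1/2=\{1/2,3/2,\dots\}$. *)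

theory Defs
  imports "HOL-Analysis.Analysis"
begin

definition kstar :: "nat \<Rightarrow> real \<Rightarrow> int" where
  "kstar p a =
     (if even p then int (p div 2) - \<lfloor>-a\<rfloor>
      else if a - real_of_int \<lfloor>a\<rfloor> \<le> 1/2 then int ((p+1) div 2) + \<lfloor>a\<rfloor>
      else int ((p+1) div 2) + \<lfloor>a\<rfloor> + 1)"

definition Astar :: "nat \<Rightarrow> real \<Rightarrow> real" where
  "Astar p a =
     (if even p then a + real_of_int \<lfloor>-a\<rfloor> + 1
      else if a - real_of_int \<lfloor>a\<rfloor> \<le> 1/2 then 1/2 + a - real_of_int \<lfloor>a\<rfloor>
      else a - real_of_int \<lfloor>a\<rfloor> - 1/2)"

definition ord_stat :: "nat \<Rightarrow> (nat \<Rightarrow> real) \<Rightarrow> nat \<Rightarrow> real" where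
  "ord_stat p lam k = sort (map lam [1..<p+1]) ! (k - 1)"

definition wratio :: "(real \<Rightarrow> real) \<Rightarrow> (real \<Rightarrow> real) \<Rightarrow> ennreal" where
  "wratio f w =
     (\<integral>\<^sup>+ t. ennreal (f t * w t) * indicator {0<..} t \<partial>lborel) /
     (\<integral>\<^sup>+ t. ennreal (w t) * indicator {0<..} t \<partial>lborel)"

text \<open>Unnormalised prior density of tau^2 (the constant C(a,b,c) cancels).\<close>
definition pi_tau :: "real \<Rightarrow> real \<Rightarrow> real \<Rightarrow> real \<Rightarrow> real" where
  "pi_tau a b c t = t powr (a - 1) * (c + t) powr (-(a + b))"

text \<open>Unnormalised conditional density of tau^2 given lam.\<close>
definition post_w :: "nat \<Rightarrow> real \<Rightarrow> real \<Rightarrow> real \<Rightarrow> (nat \<Rightarrow> real) \<Rightarrow> real \<Rightarrow> real" where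
  "post_w p a b c lam t = pi_tau a b c t * (\<Prod>k\<in>{1..p}. t powr (1/2) / (lam k + t))"

definition condE :: "nat \<Rightarrow> real \<Rightarrow> real \<Rightarrow> real \<Rightarrow> (nat \<Rightarrow> real) \<Rightarrow> (real \<Rightarrow> real) \<Rightarrow> ennreal" where
  "condE p a b c lam f = wratio f (post_w p a b c lam)"

end

theory Submission
  imports Defs
begin

lemma AE_pos_false:
  assumes "AE t in lborel. \<not> (t > (0::real))" shows False
proof -
  have "emeasure lborel {0::real<..} = 0"
    using assms by (subst (asm) AE_iff_measurable[of "{0<..}"]) auto
  moreover have "emeasure lborel {0::real<..1} \<le> emeasure lborel {0::real<..}"
    by (intro emeasure_mono) auto
  ultimately show False by simp
qed

lemma int_pos:
  fixes g :: "real \<Rightarrow> real"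
  assumes [measurable]: "g \<in> borel_measurable borel" and pos: "\<And>t. t > 0 \<Longrightarrow> g t > 0"
  shows "(\<integral>\<^sup>+t. ennreal (g t) * indicator {0<..} t \<partial>lborel) \<noteq> 0"
proof
  assume "(\<integral>\<^sup>+t. ennreal (g t) * indicator {0<..} t \<partial>lborel) = 0"
  then have "AE t in lborel. ennreal (g t) * indicator {0<..} t = 0"
    by (subst (asm) nn_integral_0_iff_AE) auto
  then have "AE t in lborel. \<not> (t > (0::real))"
  proof (rule eventually_mono)
    fix t :: real assume "ennreal (g t) * indicator {0<..} t = 0"
    then show "\<not> t > 0" using pos[of t] by (auto simp: indicator_def split: if_splits)
  qed
  then show False by (rule AE_pos_false)
qed

lemma int_fin:
  fixes g :: "real \<Rightarrow> real"
  assumes [measurable]: "g \<in> borel_measurable borel" and al: "\<alpha> > 0" and be: "\<beta> > 0" and C: "C \<ge> 0" and Dc: "Dc \<ge> 0"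
    and lo: "\<And>t. 0 < t \<Longrightarrow> t \<le> 1 \<Longrightarrow> g t \<le> C * t powr (\<alpha> - 1)"
    and hi: "\<And>t. 1 < t \<Longrightarrow> g t \<le> Dc * t powr (-\<beta> - 1)"
  shows "(\<integral>\<^sup>+t. ennreal (g t) * indicator {0<..} t \<partial>lborel) < \<infinity>"
proof -
  have i1: "((\<lambda>t. C * t powr (\<alpha> - 1)) has_integral C * (1 powr (\<alpha> - 1 + 1) / (\<alpha> - 1 + 1))) {0..1}"
    by (intro has_integral_mult_right has_integral_powr_from_0) (use al in auto)
  have i2: "((\<lambda>t. Dc * t powr (-\<beta> - 1)) has_integral Dc * (-(1 powr (-\<beta> - 1 + 1)) / (-\<beta> - 1 + 1))) {1..}"
    by (intro has_integral_mult_right has_integral_powr_to_inf) (use be in auto)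
  have n1: "(\<integral>\<^sup>+t. ennreal (C * t powr (\<alpha> - 1)) * indicator {0..1} t \<partial>lborel) = ennreal (C * (1 powr (\<alpha> - 1 + 1) / (\<alpha> - 1 + 1)))"
    by (rule nn_integral_has_integral_lebesgue'[OF _ i1]) (use C in auto)
  have n2: "(\<integral>\<^sup>+t. ennreal (Dc * t powr (-\<beta> - 1)) * indicator {1..} t \<partial>lborel) = ennreal (Dc * (-(1 powr (-\<beta> - 1 + 1)) / (-\<beta> - 1 + 1)))"
    by (rule nn_integral_has_integral_lebesgue'[OF _ i2]) (use Dc in auto)
  have "(\<integral>\<^sup>+t. ennreal (g t) * indicator {0<..} t \<partial>lborel) \<le>
     (\<integral>\<^sup>+t. ennreal (C * t powr (\<alpha> - 1)) * indicator {0..1} t + ennreal (Dc * t powr (-\<beta> - 1)) * indicator {1..} t \<partial>lborel)"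
  proof (intro nn_integral_mono)
    fix t :: real
    show "ennreal (g t) * indicator {0<..} t \<le> ennreal (C * t powr (\<alpha> - 1)) * indicator {0..1} t + ennreal (Dc * t powr (-\<beta> - 1)) * indicator {1..} t"
    proof (cases "t \<le> 0")
      case True then show ?thesis by (simp add: indicator_def)
    next
      case False
      show ?thesis
      proof (cases "t \<le> 1")
        case True
        then have "ennreal (g t) \<le> ennreal (C * t powr (\<alpha> - 1))" using lo False by (intro ennreal_leI) auto
        then have "ennreal (g t) * indicator {0<..} t \<le> ennreal (C * t powr (\<alpha> - 1)) * indicator {0..1} t"
          using True False by (simp add: indicator_def)
        then show ?thesis by (rule order_trans) simp
      next
        case F2: False
        then have "ennreal (g t) \<le> ennreal (Dc * t powr (-\<beta> - 1))" using hi by (intro ennreal_leI) auto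
        then show ?thesis using F2 False by (simp add: indicator_def)
      qed
    qed
  qed
  also have "\<dots> = ennreal (C * (1 powr (\<alpha> - 1 + 1) / (\<alpha> - 1 + 1))) + ennreal (Dc * (-(1 powr (-\<beta> - 1 + 1)) / (-\<beta> - 1 + 1)))"
    by (subst nn_integral_add) (auto simp: n1 n2)
  also have "\<dots> < \<infinity>" by simp
  finally show ?thesis .
qed

lemma mlr:
  fixes f g h r :: "real \<Rightarrow> real" and F G :: real
  assumes [measurable]: "f \<in> borel_measurable borel" "g \<in> borel_measurable borel" "h \<in> borel_measurable borel"
    and gpos: "\<And>t. t > 0 \<Longrightarrow> g t > 0"
    and fnn: "\<And>t. t > 0 \<Longrightarrow> f t \<ge> 0"
    and fr: "\<And>t. t > 0 \<Longrightarrow> f t = r t * g t"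
    and hnn: "\<And>t. t > 0 \<Longrightarrow> h t \<ge> 0"
    and opp: "\<And>s t. s > 0 \<Longrightarrow> t > 0 \<Longrightarrow> r s < r t \<Longrightarrow> h t \<le> h s"
    and ZF: "(\<integral>\<^sup>+t. ennreal (f t) * indicator {0<..} t \<partial>lborel) = ennreal F" and Fp: "F > 0"
    and ZG: "(\<integral>\<^sup>+t. ennreal (g t) * indicator {0<..} t \<partial>lborel) = ennreal G" and Gp: "G > 0"
  shows "wratio h f \<le> wratio h g"
proof -
  define c0 where "c0 = F / G"
  have c0p: "c0 > 0" using Fp Gp by (simp add: c0_def)
  have Sne: "\<exists>s>0. r s \<le> c0"
  proof (rule ccontr)
    assume "\<not> ?thesis"
    then have gt: "\<And>t. t > 0 \<Longrightarrow> f t > c0 * g t" using fr gpos by (metis linorder_not_le mult_strict_right_mono)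
    define X where "X = (\<integral>\<^sup>+t. ennreal (f t - c0 * g t) * indicator {0<..} t \<partial>lborel)"
    have "ennreal F = (\<integral>\<^sup>+t. ennreal (f t - c0 * g t) * indicator {0<..} t + ennreal c0 * (ennreal (g t) * indicator {0<..} t) \<partial>lborel)"
      unfolding ZF[symmetric]
    proof (intro nn_integral_cong)
      fix t :: real
      show "ennreal (f t) * indicator {0<..} t = ennreal (f t - c0 * g t) * indicator {0<..} t + ennreal c0 * (ennreal (g t) * indicator {0<..} t)"
      proof (cases "t > 0")
        case True
        then have "ennreal (f t) = ennreal (f t - c0 * g t) + ennreal (c0 * g t)"
          using gt[OF True] gpos[OF True] c0p by (subst ennreal_plus[symmetric]) auto
        then show ?thesis using True c0p gpos[OF True] by (simp add: ennreal_mult')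
      qed simp
    qed
    also have "\<dots> = X + ennreal c0 * ennreal G"
      unfolding X_def by (subst nn_integral_add) (auto simp: nn_integral_cmult ZG)
    also have "ennreal c0 * ennreal G = ennreal F" using Gp c0p by (simp add: c0_def ennreal_mult'[symmetric])
    finally have "ennreal F + X = ennreal F + 0" by (simp add: add.commute)
    then have "X = 0" using ennreal_add_left_cancel[of "ennreal F" X 0] by simp
    then have "AE t in lborel. ennreal (f t - c0 * g t) * indicator {0<..} t = 0"
      unfolding X_def by (subst (asm) nn_integral_0_iff_AE) auto
    then have "AE t in lborel. \<not> (t > (0::real))"
    proof (rule eventually_mono)
      fix t :: real assume "ennreal (f t - c0 * g t) * indicator {0<..} t = 0"
      then show "\<not> t > 0" using gt[of t] by (auto simp: indicator_def split: if_splits)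
    qed
    then show False by (rule AE_pos_false)
  qed
  then obtain s0 where s0: "s0 > 0" "r s0 \<le> c0" by blast
  define T where "T = {t. t > 0 \<and> r t > c0}"
  define H where "H = (if T = {} then 0 else Sup (h ` T))"
  have Tle: "h u \<le> h s" if "u \<in> T" "s > 0" "r s \<le> c0" for u s
    using that opp[of s u] by (auto simp: T_def)
  have H1: "h u \<le> H" if "u \<in> T" for u
  proof -
    have "bdd_above (h ` T)" using Tle[OF _ s0] by (intro bdd_aboveI[of _ "h s0"]) auto
    then show ?thesis using that by (auto simp: H_def intro: cSup_upper)
  qed
  have H2: "H \<le> h s" if "s > 0" "r s \<le> c0" for s
    using that Tle hnn by (auto simp: H_def intro!: cSup_least)
  have H0: "H \<ge> 0"
  proof (cases "T = {}")
    case True then show ?thesis by (simp add: H_def)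
  next
    case False
    then obtain u where u: "u \<in> T" by blast
    then have "0 \<le> h u" using hnn by (auto simp: T_def)
    also have "\<dots> \<le> H" by (rule H1[OF u])
    finally show ?thesis .
  qed
  have pw: "h t * f t + H * c0 * g t \<le> c0 * h t * g t + H * f t" if t: "t > 0" for t
  proof -
    have eq: "h t * f t + H * c0 * g t - (c0 * h t * g t + H * f t) = g t * ((h t - H) * (r t - c0))"
      using fr[OF t] by (simp add: algebra_simps)
    have "(h t - H) * (r t - c0) \<le> 0"
    proof (cases "r t \<le> c0")
      case True then show ?thesis using H2[OF t True] by (simp add: mult_nonneg_nonpos)
    next
      case False then have "t \<in> T" using t by (auto simp: T_def)
      then show ?thesis using H1 False by (simp add: mult_nonpos_nonneg)
    qed
    then have "g t * ((h t - H) * (r t - c0)) \<le> 0" using gpos[OF t] by (simp add: mult_nonneg_nonpos)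
    then show ?thesis using eq by linarith
  qed
  define Ihf where "Ihf = (\<integral>\<^sup>+t. ennreal (h t * f t) * indicator {0<..} t \<partial>lborel)"
  define Ihg where "Ihg = (\<integral>\<^sup>+t. ennreal (h t * g t) * indicator {0<..} t \<partial>lborel)"
  have "(\<integral>\<^sup>+t. ennreal (h t * f t) * indicator {0<..} t + ennreal (H * c0) * (ennreal (g t) * indicator {0<..} t) \<partial>lborel)
     \<le> (\<integral>\<^sup>+t. ennreal c0 * (ennreal (h t * g t) * indicator {0<..} t) + ennreal H * (ennreal (f t) * indicator {0<..} t) \<partial>lborel)"
  proof (intro nn_integral_mono)
    fix t :: real
    show "ennreal (h t * f t) * indicator {0<..} t + ennreal (H * c0) * (ennreal (g t) * indicator {0<..} t)
      \<le> ennreal c0 * (ennreal (h t * g t) * indicator {0<..} t) + ennreal H * (ennreal (f t) * indicator {0<..} t)"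
    proof (cases "t > 0")
      case True
      have nn: "0 \<le> h t * f t" "0 \<le> H * c0 * g t" "0 \<le> c0 * h t * g t" "0 \<le> H * f t"
        using hnn[OF True] fnn[OF True] gpos[OF True] H0 c0p by auto
      have "ennreal (h t * f t) + ennreal (H * c0 * g t) \<le> ennreal (c0 * h t * g t) + ennreal (H * f t)"
        using pw[OF True] nn by (simp add: ennreal_plus[symmetric] del: ennreal_plus)
      then show ?thesis using True H0 c0p by (simp add: ennreal_mult'[symmetric] mult.assoc)
    qed simp
  qed
  also have "\<dots> = ennreal c0 * Ihg + ennreal H * ennreal F"
    unfolding Ihg_def by (subst nn_integral_add) (auto simp: nn_integral_cmult ZF)
  finally have ineq: "Ihf + ennreal (H * c0) * ennreal G \<le> ennreal c0 * Ihg + ennreal H * ennreal F"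
    unfolding Ihf_def by (subst (asm) nn_integral_add) (auto simp: nn_integral_cmult ZG)
  have e1: "ennreal (H * c0) * ennreal G = ennreal (H * F)"
  proof -
    have "ennreal (H * c0) * ennreal G = ennreal (H * c0 * G)"
      using H0 c0p by (simp add: ennreal_mult'[symmetric])
    also have "H * c0 * G = H * F" using Gp by (simp add: c0_def)
    finally show ?thesis .
  qed
  have e2: "ennreal H * ennreal F = ennreal (H * F)"
    using H0 by (simp add: ennreal_mult'[symmetric])
  have "ennreal (H * F) + Ihf \<le> ennreal (H * F) + ennreal c0 * Ihg"
    using ineq unfolding e1 e2 by (simp add: add.commute)
  then have le: "Ihf \<le> ennreal c0 * Ihg"
    using ennreal_add_left_cancel_le[of "ennreal (H * F)" Ihf "ennreal c0 * Ihg"] by simp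
  have "wratio h f = Ihf / ennreal F" unfolding wratio_def Ihf_def ZF ..
  also have "\<dots> \<le> (ennreal c0 * Ihg) / ennreal F" by (rule divide_right_mono_ennreal[OF le])
  also have "\<dots> = Ihg / ennreal G"
    using Fp Gp by (simp add: divide_ennreal_def inverse_ennreal c0_def ennreal_mult'[symmetric] mult.commute mult.left_commute inverse_eq_divide)
  also have "\<dots> = wratio h g" unfolding wratio_def Ihg_def ZG ..
  finally show ?thesis .
qed


lemma fin_obtain:
  assumes "(X::ennreal) < \<infinity>" "X \<noteq> 0"
  obtains F where "X = ennreal F" "F > 0"
proof -
  from assms(1) obtain F where "F \<ge> 0" "X = ennreal F"
    by (cases X rule: ennreal_cases) auto
  moreover then have "F \<noteq> 0" using assms(2) by auto
  ultimately show ?thesis using that by auto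
qed

lemma mlr':
  fixes f g h r :: "real \<Rightarrow> real"
  assumes [measurable]: "f \<in> borel_measurable borel" "g \<in> borel_measurable borel" "h \<in> borel_measurable borel"
    and gpos: "\<And>t. t > 0 \<Longrightarrow> g t > 0"
    and fpos: "\<And>t. t > 0 \<Longrightarrow> f t > 0"
    and fr: "\<And>t. t > 0 \<Longrightarrow> f t = r t * g t"
    and hnn: "\<And>t. t > 0 \<Longrightarrow> h t \<ge> 0"
    and opp: "\<And>s t. s > 0 \<Longrightarrow> t > 0 \<Longrightarrow> r s < r t \<Longrightarrow> h t \<le> h s"
    and ZF: "(\<integral>\<^sup>+t. ennreal (f t) * indicator {0<..} t \<partial>lborel) < \<infinity>"
    and ZG: "(\<integral>\<^sup>+t. ennreal (g t) * indicator {0<..} t \<partial>lborel) < \<infinity>"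
  shows "wratio h f \<le> wratio h g"
proof -
  obtain F where F: "(\<integral>\<^sup>+t. ennreal (f t) * indicator {0<..} t \<partial>lborel) = ennreal F" "F > 0"
    using fin_obtain[OF ZF int_pos[of f]] fpos by auto
  obtain G where G: "(\<integral>\<^sup>+t. ennreal (g t) * indicator {0<..} t \<partial>lborel) = ennreal G" "G > 0"
    using fin_obtain[OF ZG int_pos[of g]] gpos by auto
  show ?thesis
    by (rule mlr[OF assms(1-3) gpos _ fr hnn opp F G]) (use fpos in \<open>auto intro: less_imp_le\<close>)
qed

lemma len_filter_map_upt:
  "length (filter P (map lam [1..<p+1])) = card {j\<in>{1..p}. P (lam j)}"
proof -
  have "length (filter P (map lam [1..<p+1])) = length (filter (P \<circ> lam) [1..<p+1])"
    by (simp add: filter_map)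
  also have "\<dots> = card (set (filter (P \<circ> lam) [1..<p+1]))"
    by (rule distinct_card[symmetric]) simp
  also have "set (filter (P \<circ> lam) [1..<p+1]) = {j\<in>{1..p}. P (lam j)}" by auto
  finally show ?thesis .
qed

lemma len_filter_sort: "length (filter P (sort xs)) = length (filter P xs)"
  by (metis mset_filter mset_sort size_mset)

lemma ordstat:
  assumes k: "1 \<le> k" "k \<le> p"
  shows "card {j\<in>{1..p}. lam j < ord_stat p lam k} \<le> k - 1"
    and "\<exists>K \<subseteq> {1..p}. card K = k \<and> (\<forall>j\<in>K. lam j \<le> ord_stat p lam k)"
    and "(\<forall>j\<in>{1..p}. lam j > 0) \<Longrightarrow> ord_stat p lam k > 0"
proof -
  define xs where "xs = sort (map lam [1..<p+1])"
  define ls where "ls = ord_stat p lam k"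
  have ls: "ls = xs ! (k - 1)" by (simp add: ls_def ord_stat_def xs_def)
  have len: "length xs = p" by (simp add: xs_def)
  have sorted: "sorted xs" by (simp add: xs_def)
  have "card {j\<in>{1..p}. lam j < ls} = length (filter (\<lambda>x. x < ls) xs)"
    unfolding xs_def len_filter_sort len_filter_map_upt ..
  also have "filter (\<lambda>x. x < ls) xs = filter (\<lambda>x. x < ls) (take (k-1) xs) @ filter (\<lambda>x. x < ls) (drop (k-1) xs)"
    by (metis append_take_drop_id filter_append)
  also have "filter (\<lambda>x. x < ls) (drop (k-1) xs) = []"
  proof -
    have "\<not> x < ls" if "x \<in> set (drop (k-1) xs)" for x
    proof -
      from that obtain i where i: "i < length (drop (k-1) xs)" "x = drop (k-1) xs ! i"
        by (auto simp: in_set_conv_nth)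
      then have "x = xs ! (k - 1 + i)" "k - 1 + i < length xs" using k by auto
      then show ?thesis using sorted_nth_mono[OF sorted, of "k-1" "k-1+i"] ls by auto
    qed
    then show ?thesis by (auto simp: filter_empty_conv)
  qed
  finally have "card {j\<in>{1..p}. lam j < ls} \<le> length (take (k-1) xs)"
    by (simp del: length_take)
  then show "card {j\<in>{1..p}. lam j < ord_stat p lam k} \<le> k - 1" using len k by (simp add: ls_def)
  have "k = length (filter (\<lambda>x. x \<le> ls) (take k xs))"
  proof -
    have "\<forall>x\<in>set (take k xs). x \<le> ls"
    proof
      fix x assume "x \<in> set (take k xs)"
      then obtain i where i: "i < length (take k xs)" "x = take k xs ! i"
        by (auto simp: in_set_conv_nth)
      then have "x = xs ! i" "i \<le> k - 1" "k - 1 < length xs" using k len by auto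
      then show "x \<le> ls" using sorted_nth_mono[OF sorted, of i "k-1"] ls by auto
    qed
    then have "filter (\<lambda>x. x \<le> ls) (take k xs) = take k xs" by simp
    then show ?thesis using k len by simp
  qed
  also have "\<dots> \<le> length (filter (\<lambda>x. x \<le> ls) xs)"
    by (metis append_take_drop_id filter_append length_append le_add1)
  also have "\<dots> = card {j\<in>{1..p}. lam j \<le> ls}"
    unfolding xs_def len_filter_sort len_filter_map_upt ..
  finally obtain K where K: "K \<subseteq> {j\<in>{1..p}. lam j \<le> ls}" "card K = k"
    by (meson obtain_subset_with_card_n)
  show "\<exists>K \<subseteq> {1..p}. card K = k \<and> (\<forall>j\<in>K. lam j \<le> ord_stat p lam k)"
  proof (intro exI conjI)
    show "K \<subseteq> {1..p}" using K(1) by auto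
    show "card K = k" by (rule K(2))
    show "\<forall>j\<in>K. lam j \<le> ord_stat p lam k" using K(1) unfolding ls_def by auto
  qed
  assume pos: "\<forall>j\<in>{1..p}. lam j > 0"
  have "ls \<in> set xs" using ls len k by auto
  then have "ls \<in> lam ` {1..p}" by (auto simp: xs_def)
  then show "ord_stat p lam k > 0" using pos by (auto simp: ls_def)
qed

lemma kstar_bounds:
  assumes "p \<ge> 1" "a > 0"
  shows "real p / 2 + a \<le> real_of_int (kstar p a)"
    and "real_of_int (kstar p a) < real p / 2 + a + 1"
    and "a + real p / 2 - Astar p a = real_of_int (kstar p a) - 1"
    and "Astar p a > 0"
proof -
  have fl: "real_of_int \<lfloor>a\<rfloor> \<le> a" "a < real_of_int \<lfloor>a\<rfloor> + 1"
    "real_of_int \<lfloor>-a\<rfloor> \<le> -a" "-a < real_of_int \<lfloor>-a\<rfloor> + 1" by linarith+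
  consider (e) "even p" | (o1) "odd p" "a - real_of_int \<lfloor>a\<rfloor> \<le> 1/2" | (o2) "odd p" "\<not> a - real_of_int \<lfloor>a\<rfloor> \<le> 1/2" by blast
  then have "real p / 2 + a \<le> real_of_int (kstar p a) \<and> real_of_int (kstar p a) < real p / 2 + a + 1
    \<and> a + real p / 2 - Astar p a = real_of_int (kstar p a) - 1 \<and> Astar p a > 0"
  proof cases
    case e
    then have d: "real (p div 2) = real p / 2" by (auto elim!: evenE)
    have "real_of_int (kstar p a) = real p / 2 - real_of_int \<lfloor>-a\<rfloor>" "Astar p a = a + real_of_int \<lfloor>-a\<rfloor> + 1"
      using e d by (simp_all add: kstar_def Astar_def)
    then show ?thesis using fl by linarith
  next
    case o1
    then have d: "real ((p + 1) div 2) = real p / 2 + 1/2" by (auto elim!: oddE simp: field_simps)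
    have "real_of_int (kstar p a) = real p / 2 + 1/2 + real_of_int \<lfloor>a\<rfloor>" "Astar p a = 1/2 + a - real_of_int \<lfloor>a\<rfloor>"
      using o1 d by (simp_all add: kstar_def Astar_def)
    note X = this
    show ?thesis apply (intro conjI) using X fl o1 by linarith+
  next
    case o2
    then have d: "real ((p + 1) div 2) = real p / 2 + 1/2" by (auto elim!: oddE simp: field_simps)
    have "real_of_int (kstar p a) = real p / 2 + 1/2 + real_of_int \<lfloor>a\<rfloor> + 1" "Astar p a = a - real_of_int \<lfloor>a\<rfloor> - 1/2"
      using o2 d by (simp_all add: kstar_def Astar_def)
    note X = this
    show ?thesis apply (intro conjI) using X fl o2 by linarith+
  qed
  then show "real p / 2 + a \<le> real_of_int (kstar p a)" "real_of_int (kstar p a) < real p / 2 + a + 1"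
    "a + real p / 2 - Astar p a = real_of_int (kstar p a) - 1" "Astar p a > 0" by auto
qed

lemma kstar_range:
  assumes "p \<ge> 1" "a > 0" "a \<le> real p / 2"
  shows "kstar p a \<in> {1..int p}"
proof -
  have "real_of_int (kstar p a) > 0" using kstar_bounds(1)[OF assms(1,2)] assms by linarith
  then have "kstar p a \<ge> 1" by simp
  moreover have "real_of_int (kstar p a) < real p + 1" using kstar_bounds(2)[OF assms(1,2)] assms by linarith
  then have "kstar p a < int p + 1" by linarith
  ultimately show ?thesis by simp
qed

lemma kstar_strict:
  assumes "p \<ge> 1" "a > 0"
    and h: "(even p \<longrightarrow> a \<notin> \<nat>) \<and> (odd p \<longrightarrow> (\<forall>n::nat. n \<ge> 1 \<longrightarrow> a \<noteq> real n - 1/2))"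
  shows "real p / 2 + a < real_of_int (kstar p a)"
proof -
  have le: "real p / 2 + a \<le> real_of_int (kstar p a)" by (rule kstar_bounds(1)[OF assms(1,2)])
  have fl: "real_of_int \<lfloor>a\<rfloor> \<le> a" "a < real_of_int \<lfloor>a\<rfloor> + 1"
    "real_of_int \<lfloor>-a\<rfloor> \<le> -a" "-a < real_of_int \<lfloor>-a\<rfloor> + 1" by linarith+
  show ?thesis
  proof (rule ccontr)
    assume "\<not> ?thesis"
    then have eq: "real_of_int (kstar p a) = real p / 2 + a" using le by linarith
    consider (e) "even p" | (o1) "odd p" "a - real_of_int \<lfloor>a\<rfloor> \<le> 1/2" | (o2) "odd p" "\<not> a - real_of_int \<lfloor>a\<rfloor> \<le> 1/2" by blast
    then show False
    proof cases
      case e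
      then have "real (p div 2) = real p / 2" by (auto elim!: evenE)
      then have "a = - real_of_int \<lfloor>-a\<rfloor>" using e eq by (simp add: kstar_def)
      then have "a = real (nat (- \<lfloor>-a\<rfloor>))" using assms(2) by simp
      then have "a \<in> \<nat>" by (metis of_nat_in_Nats)
      then show False using h e by blast
    next
      case o1
      then have "real ((p + 1) div 2) = real p / 2 + 1/2" by (auto elim!: oddE simp: field_simps)
      then have "a = real_of_int (\<lfloor>a\<rfloor> + 1) - 1/2" using o1 eq by (simp add: kstar_def)
      moreover have "\<lfloor>a\<rfloor> \<ge> 0" using assms(2) by simp
      ultimately have "a = real (nat (\<lfloor>a\<rfloor> + 1)) - 1/2" "nat (\<lfloor>a\<rfloor> + 1) \<ge> 1" by auto
      then show False using h o1 by blast
    next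
      case o2
      then have "real ((p + 1) div 2) = real p / 2 + 1/2" by (auto elim!: oddE simp: field_simps)
      then show False using o2 eq fl by (simp add: kstar_def)
    qed
  qed
qed

lemma powr_exp: "x > 0 \<Longrightarrow> x powr y = exp (y * ln x)" for x y :: real
  by (simp add: powr_def)

lemma post_exp:
  assumes t: "t > 0" and c: "c > 0" and lam: "\<forall>j\<in>{1..p}. lam j > 0"
  shows "post_w p a b c lam t = exp ((a - 1 + real p / 2) * ln t - (a + b) * ln (c + t) - (\<Sum>j\<in>{1..p}. ln (lam j + t)))"
proof -
  have "(\<Prod>j\<in>{1..p}. t powr (1/2) / (lam j + t)) = (\<Prod>j\<in>{1..p}. exp (ln t / 2 - ln (lam j + t)))"
  proof (rule prod.cong)
    fix j assume "j \<in> {1..p}"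
    then have "lam j > 0" using lam by blast
    then have "lam j + t > 0" using t by auto
    then show "t powr (1/2) / (lam j + t) = exp (ln t / 2 - ln (lam j + t))"
      using t by (simp add: powr_exp exp_diff)
  qed simp
  also have "\<dots> = exp (\<Sum>j\<in>{1..p}. ln t / 2 - ln (lam j + t))" by (simp add: exp_sum)
  also have "(\<Sum>j\<in>{1..p}. ln t / 2 - ln (lam j + t)) = real p / 2 * ln t - (\<Sum>j\<in>{1..p}. ln (lam j + t))"
    by (simp add: sum_subtractf)
  finally have P: "(\<Prod>j\<in>{1..p}. t powr (1/2) / (lam j + t)) = exp (real p / 2 * ln t - (\<Sum>j\<in>{1..p}. ln (lam j + t)))" .
  have "post_w p a b c lam t = exp ((a - 1) * ln t) * exp (-(a + b) * ln (c + t)) * exp (real p / 2 * ln t - (\<Sum>j\<in>{1..p}. ln (lam j + t)))"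
    unfolding post_w_def pi_tau_def P using t c by (simp add: powr_exp)
  also have "\<dots> = exp ((a - 1 + real p / 2) * ln t - (a + b) * ln (c + t) - (\<Sum>j\<in>{1..p}. ln (lam j + t)))"
    by (simp add: exp_add[symmetric] algebra_simps)
  finally show ?thesis .
qed

lemma post_pos:
  assumes t: "t > 0" and c: "c > 0" and lam: "\<forall>j\<in>{1..p}. lam j > 0"
  shows "post_w p a b c lam t > 0"
  using post_exp[OF assms] by simp

lemma post_fin:
  assumes a: "a > 0" and b: "b > 0" and c: "c > 0" and lam: "\<forall>j\<in>{1..p}. lam j > 0"
  shows "(\<integral>\<^sup>+t. ennreal (post_w p a b c lam t) * indicator {0<..} t \<partial>lborel) < \<infinity>"
proof (rule int_fin[where \<alpha> = a and \<beta> = "b + real p / 2" and C = "exp (-(a + b) * ln c - (\<Sum>j\<in>{1..p}. ln (lam j)))" and Dc = 1])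
  show "(\<lambda>t. post_w p a b c lam t) \<in> borel_measurable borel" unfolding post_w_def pi_tau_def by measurable
  show "a > 0" "b + real p / 2 > 0" "exp (-(a + b) * ln c - (\<Sum>j\<in>{1..p}. ln (lam j))) \<ge> 0" "(1::real) \<ge> 0" using a b by auto
next
  fix t :: real assume t: "0 < t" "t \<le> 1"
  have l1: "ln t \<le> 0" using t by simp
  have l2: "(a + b) * ln c \<le> (a + b) * ln (c + t)" using a b c t by (intro mult_left_mono) auto
  have l3: "(\<Sum>j\<in>{1..p}. ln (lam j)) \<le> (\<Sum>j\<in>{1..p}. ln (lam j + t))"
  proof (rule sum_mono)
    fix j assume "j \<in> {1..p}"
    then have "lam j > 0" using lam by blast
    then show "ln (lam j) \<le> ln (lam j + t)" using t by simp
  qed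
  have l4: "real p / 2 * ln t \<le> 0" using l1 by (simp add: mult_nonneg_nonpos)
  have "(a - 1 + real p / 2) * ln t - (a + b) * ln (c + t) - (\<Sum>j\<in>{1..p}. ln (lam j + t))
     \<le> (-(a + b) * ln c - (\<Sum>j\<in>{1..p}. ln (lam j))) + (a - 1) * ln t"
    using l2 l3 l4 by (simp add: algebra_simps)
  then show "post_w p a b c lam t \<le> exp (-(a + b) * ln c - (\<Sum>j\<in>{1..p}. ln (lam j))) * t powr (a - 1)"
    using t c lam by (simp add: post_exp powr_exp exp_add[symmetric])
next
  fix t :: real assume t: "1 < t"
  have l2: "(a + b) * ln t \<le> (a + b) * ln (c + t)" using a b c t by (intro mult_left_mono) auto
  have l3: "(\<Sum>j\<in>{1..p}. ln t) \<le> (\<Sum>j\<in>{1..p}. ln (lam j + t))"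
  proof (rule sum_mono)
    fix j assume "j \<in> {1..p}"
    then have "lam j > 0" using lam by blast
    then show "ln t \<le> ln (lam j + t)" using t by simp
  qed
  then have l3': "real p * ln t \<le> (\<Sum>j\<in>{1..p}. ln (lam j + t))" by simp
  have "(a - 1 + real p / 2) * ln t - (a + b) * ln (c + t) - (\<Sum>j\<in>{1..p}. ln (lam j + t))
     \<le> (- (b + real p / 2) - 1) * ln t"
    using l2 l3' by (simp add: algebra_simps)
  then show "post_w p a b c lam t \<le> 1 * t powr (- (b + real p / 2) - 1)"
    using t c lam by (simp add: post_exp powr_exp)
qed

lemma m1: "0 < s \<Longrightarrow> s \<le> t \<Longrightarrow> 0 \<le> x \<Longrightarrow> s / (x + s) \<le> t / (x + t)" for s t x :: real
proof -
  assume h: "0 < s" "s \<le> t" "0 \<le> x"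
  have "s * x \<le> t * x" using h by (intro mult_right_mono) auto
  then have "s * (x + t) \<le> t * (x + s)" by (simp add: algebra_simps)
  then show ?thesis using h by (simp add: divide_simps)
qed

lemma m2: "0 < s \<Longrightarrow> s \<le> t \<Longrightarrow> 0 \<le> l \<Longrightarrow> l \<le> x \<Longrightarrow> (l + s) / (x + s) \<le> (l + t) / (x + t)" for s t x l :: real
proof -
  assume h: "0 < s" "s \<le> t" "0 \<le> l" "l \<le> x"
  have "0 \<le> (t - s) * (x - l)" using h by simp
  then have "(l + s) * (x + t) \<le> (l + t) * (x + s)" by (simp add: algebra_simps)
  then show ?thesis using h by (simp add: divide_simps)
qed

lemma m3: "0 < s \<Longrightarrow> s \<le> t \<Longrightarrow> 0 < x \<Longrightarrow> x \<le> l \<Longrightarrow> (l + t) / (x + t) \<le> (l + s) / (x + s)" for s t x l :: real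
proof -
  assume h: "0 < s" "s \<le> t" "0 < x" "x \<le> l"
  have "0 \<le> (t - s) * (l - x)" using h by simp
  then have "(l + t) * (x + s) \<le> (l + s) * (x + t)" by (simp add: algebra_simps)
  then show ?thesis using h by (simp add: divide_simps)
qed

lemma m4: "0 < s \<Longrightarrow> s \<le> t \<Longrightarrow> 0 < x \<Longrightarrow> 1 / (x + t) \<le> 1 / (x + s)" for s t x :: real
  by (simp add: divide_simps)

lemma part1:
  fixes p :: nat and a b c \<epsilon> :: real and lam :: "nat \<Rightarrow> real"
  assumes hp: "p \<ge> 1" and ha: "a > 0" and hb: "b > 0" and hc: "c > 0"
    and hap: "a \<le> real p / 2" and eps: "\<epsilon> > 0" and lam: "\<forall>k\<in>{1..p}. lam k > 0"
  shows "condE p a b c lam (\<lambda>t. t powr (-\<epsilon>))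
     \<le> wratio (\<lambda>t. t powr (-\<epsilon>))
          (\<lambda>t. t powr (Astar p a - 1) * (c + t) powr (-(a + b))
              * (ord_stat p lam (nat (kstar p a)) + t) powr (-(Astar p a + real p / 2 - a)))"
proof -
  define k where "k = nat (kstar p a)"
  have kr: "kstar p a \<in> {1..int p}" by (rule kstar_range[OF hp ha hap])
  then have k1: "1 \<le> k" "k \<le> p" and kk: "real k = real_of_int (kstar p a)" by (auto simp: k_def)
  define ls where "ls = ord_stat p lam k"
  define A where "A = Astar p a"
  define d where "d = k - 1"
  have dA: "real d = a + real p / 2 - A"
    using kstar_bounds(3)[OF hp ha] k1 kk by (simp add: d_def A_def of_nat_diff)
  have Ap: "A > 0" using kstar_bounds(4)[OF hp ha] by (simp add: A_def)
  have lsp: "ls > 0" using ordstat(3)[OF k1] lam by (simp add: ls_def)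
  define L where "L = {j\<in>{1..p}. lam j < ls}"
  define R where "R = {j\<in>{1..p}. \<not> lam j < ls}"
  have cardL: "card L \<le> d" using ordstat(1)[OF k1, of lam] by (simp add: L_def ls_def d_def)
  have lj: "\<And>j. j \<in> {1..p} \<Longrightarrow> lam j > 0" using lam by blast
  define e where "e = A + real p / 2 - a"
  have ep: "e > 0" using dA k1 by (simp add: e_def d_def of_nat_diff)
  define g where "g = (\<lambda>t. t powr (A - 1) * (c + t) powr (-(a + b)) * (ls + t) powr (-e))"
  define r where "r = (\<lambda>t. (t / (ls + t)) ^ d * (\<Prod>j\<in>{1..p}. (ls + t) / (lam j + t)))"
  define r' where "r' = (\<lambda>t. (t / (ls + t)) ^ (d - card L) * (\<Prod>j\<in>L. t / (lam j + t)) * (\<Prod>j\<in>R. (ls + t) / (lam j + t)))"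
  have g_exp: "g t = exp ((A - 1) * ln t - (a + b) * ln (c + t) - e * ln (ls + t))" if t: "t > 0" for t
    using t hc lsp by (simp add: g_def powr_exp exp_add[symmetric] exp_diff[symmetric] algebra_simps)
  have r_exp: "r t = exp (real d * (ln t - ln (ls + t)) + real p * ln (ls + t) - (\<Sum>j\<in>{1..p}. ln (lam j + t)))" if t: "t > 0" for t
  proof -
    have "(\<Prod>j\<in>{1..p}. (ls + t) / (lam j + t)) = (\<Prod>j\<in>{1..p}. exp (ln (ls + t) - ln (lam j + t)))"
    proof (rule prod.cong)
      fix j assume "j \<in> {1..p}"
      then have "lam j + t > 0" using lj t by force
      then show "(ls + t) / (lam j + t) = exp (ln (ls + t) - ln (lam j + t))" using t lsp by (simp add: exp_diff)
    qed simp
    also have "\<dots> = exp (real p * ln (ls + t) - (\<Sum>j\<in>{1..p}. ln (lam j + t)))"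
      by (simp add: exp_sum[symmetric] sum_subtractf)
    finally have P: "(\<Prod>j\<in>{1..p}. (ls + t) / (lam j + t)) = \<dots>" .
    have Q: "(t / (ls + t)) ^ d = exp (real d * (ln t - ln (ls + t)))"
      using t lsp by (simp add: exp_of_nat_mult exp_diff)
    show ?thesis unfolding r_def P Q by (simp add: exp_add[symmetric])
  qed
  have fr: "post_w p a b c lam t = r t * g t" if t: "t > 0" for t
  proof -
    have Aeq: "A = a + real p / 2 - real d" using dA by simp
    have "(a - 1 + real p / 2) * ln t - (a + b) * ln (c + t) - (\<Sum>j\<in>{1..p}. ln (lam j + t))
      = (real d * (ln t - ln (ls + t)) + real p * ln (ls + t) - (\<Sum>j\<in>{1..p}. ln (lam j + t)))
        + ((A - 1) * ln t - (a + b) * ln (c + t) - e * ln (ls + t))"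
      unfolding e_def by (subst Aeq)+ (simp add: algebra_simps)
    then show ?thesis using t hc lam
      by (simp add: post_exp r_exp g_exp exp_add[symmetric])
  qed
  have rr': "r t = r' t" if t: "t > 0" for t
  proof -
    have fin: "finite L" "finite R" "L \<inter> R = {}" "{1..p} = L \<union> R" by (auto simp: L_def R_def)
    have "(\<Prod>j\<in>{1..p}. (ls + t) / (lam j + t)) = (\<Prod>j\<in>L. (ls + t) / (lam j + t)) * (\<Prod>j\<in>R. (ls + t) / (lam j + t))"
      using fin by (simp add: prod.union_disjoint)
    moreover have "(t / (ls + t)) ^ d = (t / (ls + t)) ^ (d - card L) * (\<Prod>j\<in>L. t / (ls + t))"
      using cardL by (simp add: power_add[symmetric])
    moreover have "(\<Prod>j\<in>L. t / (ls + t)) * (\<Prod>j\<in>L. (ls + t) / (lam j + t)) = (\<Prod>j\<in>L. t / (lam j + t))"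
      unfolding prod.distrib[symmetric] using t lsp by (intro prod.cong) auto
    ultimately show ?thesis unfolding r_def r'_def by (simp add: mult.assoc)
  qed
  have rmono: "r s \<le> r t" if st: "0 < s" "s \<le> t" for s t
  proof -
    have "r' s \<le> r' t" unfolding r'_def
    proof (intro mult_mono power_mono prod_mono conjI)
      show "s / (ls + s) \<le> t / (ls + t)" using m1[OF st, of ls] lsp by simp
      fix j assume j: "j \<in> L"
      then have "lam j > 0" using lj by (auto simp: L_def)
      then show "s / (lam j + s) \<le> t / (lam j + t)" "0 \<le> s / (lam j + s)" using m1[OF st, of "lam j"] st by auto
    next
      fix j assume j: "j \<in> R"
      then have "lam j \<ge> ls" "lam j > 0" using lj by (auto simp: R_def)
      then show "(ls + s) / (lam j + s) \<le> (ls + t) / (lam j + t)" "0 \<le> (ls + s) / (lam j + s)"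
        using m2[OF st, of ls "lam j"] st lsp by auto
    qed (use st lsp lj in \<open>auto intro!: prod_nonneg mult_nonneg_nonneg divide_nonneg_pos add_pos_pos simp: L_def R_def\<close>)
    then show ?thesis using rr' st by simp
  qed
  have "condE p a b c lam (\<lambda>t. t powr (-\<epsilon>)) \<le> wratio (\<lambda>t. t powr (-\<epsilon>)) g"
    unfolding condE_def
  proof (rule mlr'[where r = r])
    show "post_w p a b c lam \<in> borel_measurable borel" unfolding post_w_def pi_tau_def by measurable
    show "g \<in> borel_measurable borel" unfolding g_def by measurable
    show "(\<lambda>t. t powr (-\<epsilon>)) \<in> borel_measurable borel" by measurable
    show "\<And>t. t > 0 \<Longrightarrow> g t > 0" using g_exp by simp
    show "\<And>t. t > 0 \<Longrightarrow> post_w p a b c lam t > 0" using post_pos hc lam by blast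
    show "\<And>t. t > 0 \<Longrightarrow> post_w p a b c lam t = r t * g t" by (rule fr)
    show "\<And>t. t > 0 \<Longrightarrow> t powr (-\<epsilon>) \<ge> 0" by simp
    show "\<And>s t. s > 0 \<Longrightarrow> t > 0 \<Longrightarrow> r s < r t \<Longrightarrow> t powr (-\<epsilon>) \<le> s powr (-\<epsilon>)"
    proof -
      fix s t :: real assume h: "s > 0" "t > 0" "r s < r t"
      then have "s \<le> t" using rmono[of t s] by force
      then show "t powr (-\<epsilon>) \<le> s powr (-\<epsilon>)" using powr_mono2'[of "-\<epsilon>" s t] eps h by simp
    qed
    show "(\<integral>\<^sup>+t. ennreal (post_w p a b c lam t) * indicator {0<..} t \<partial>lborel) < \<infinity>"
      by (rule post_fin[OF ha hb hc lam])
    show "(\<integral>\<^sup>+t. ennreal (g t) * indicator {0<..} t \<partial>lborel) < \<infinity>"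
    proof (rule int_fin[where \<alpha> = A and \<beta> = "b + real p / 2" and C = "exp (-(a + b) * ln c - e * ln ls)" and Dc = 1])
      show "g \<in> borel_measurable borel" unfolding g_def by measurable
      show "A > 0" "b + real p / 2 > 0" "exp (-(a + b) * ln c - e * ln ls) \<ge> 0" "(1::real) \<ge> 0" using Ap hb by auto
    next
      fix t :: real assume t: "0 < t" "t \<le> 1"
      have l2: "(a + b) * ln c \<le> (a + b) * ln (c + t)" using ha hb hc t by (intro mult_left_mono) auto
      have l3: "e * ln ls \<le> e * ln (ls + t)" using ep lsp t by (intro mult_left_mono) auto
      have "(A - 1) * ln t - (a + b) * ln (c + t) - e * ln (ls + t) \<le> (-(a + b) * ln c - e * ln ls) + (A - 1) * ln t"
        using l2 l3 by (simp add: algebra_simps)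
      then show "g t \<le> exp (-(a + b) * ln c - e * ln ls) * t powr (A - 1)"
        using t by (simp add: g_exp powr_exp exp_add[symmetric])
    next
      fix t :: real assume t: "1 < t"
      have l2: "(a + b) * ln t \<le> (a + b) * ln (c + t)" using ha hb hc t by (intro mult_left_mono) auto
      have l3: "e * ln t \<le> e * ln (ls + t)" using ep lsp t by (intro mult_left_mono) auto
      have "(A - 1) * ln t - (a + b) * ln (c + t) - e * ln (ls + t) \<le> (A - 1) * ln t - (a + b) * ln t - e * ln t"
        using l2 l3 by simp
      also have "\<dots> = (- (b + real p / 2) - 1) * ln t" by (simp add: e_def algebra_simps)
      finally show "g t \<le> 1 * t powr (- (b + real p / 2) - 1)"
        using t by (simp add: g_exp powr_exp)
    qed
  qed
  then show ?thesis by (simp add: g_def e_def A_def ls_def k_def)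
qed

lemma part2:
  fixes p :: nat and a b c \<gamma> :: real and lam :: "nat \<Rightarrow> real"
  assumes hp: "p \<ge> 1" and ha: "a > 0" and hb: "b > 0" and hc: "c > 0"
    and hap: "a \<le> real p / 2" and gam: "\<gamma> > 0" and lam: "\<forall>k\<in>{1..p}. lam k > 0"
  shows "condE p a b c lam (\<lambda>t. t / (\<gamma> + t))
     \<le> wratio (\<lambda>t. t / (\<gamma> + t))
          (\<lambda>t. t powr (real p / 2 + a - 1) * (c + t) powr (-(a + b))
              * (ord_stat p lam (nat (kstar p a)) + t) powr (- real_of_int (kstar p a)))"
proof -
  define k where "k = nat (kstar p a)"
  have kr: "kstar p a \<in> {1..int p}" by (rule kstar_range[OF hp ha hap])
  then have k1: "1 \<le> k" "k \<le> p" and kk: "real_of_int (kstar p a) = real k" by (auto simp: k_def)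
  define ls where "ls = ord_stat p lam k"
  have lsp: "ls > 0" using ordstat(3)[OF k1] lam by (simp add: ls_def)
  obtain K where K: "K \<subseteq> {1..p}" "card K = k" "\<forall>j\<in>K. lam j \<le> ls"
    using ordstat(2)[OF k1, of lam] by (auto simp: ls_def)
  define R where "R = {1..p} - K"
  have lj: "\<And>j. j \<in> {1..p} \<Longrightarrow> lam j > 0" using lam by blast
  have kge: "real p / 2 + a \<le> real k" using kstar_bounds(1)[OF hp ha] kk by simp
  define g where "g = (\<lambda>t. t powr (real p / 2 + a - 1) * (c + t) powr (-(a + b)) * (ls + t) powr (- real k))"
  define r where "r = (\<lambda>t. (\<Prod>j\<in>K. (ls + t) / (lam j + t)) * (\<Prod>j\<in>R. 1 / (lam j + t)))"
  have g_exp: "g t = exp ((real p / 2 + a - 1) * ln t - (a + b) * ln (c + t) - real k * ln (ls + t))" if t: "t > 0" for t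
    using t hc lsp by (simp add: g_def powr_exp exp_add[symmetric] exp_diff[symmetric] algebra_simps)
  have fin: "finite K" "finite R" "K \<inter> R = {}" "{1..p} = K \<union> R" using K(1) by (auto simp: R_def finite_subset)
  have r_exp: "r t = exp (real k * ln (ls + t) - (\<Sum>j\<in>{1..p}. ln (lam j + t)))" if t: "t > 0" for t
  proof -
    have "(\<Prod>j\<in>K. (ls + t) / (lam j + t)) = (\<Prod>j\<in>K. exp (ln (ls + t) - ln (lam j + t)))"
    proof (rule prod.cong)
      fix j assume "j \<in> K"
      then have "lam j + t > 0" using lj t K(1) by force
      then show "(ls + t) / (lam j + t) = exp (ln (ls + t) - ln (lam j + t))" using t lsp by (simp add: exp_diff)
    qed simp
    also have "\<dots> = exp (real k * ln (ls + t) - (\<Sum>j\<in>K. ln (lam j + t)))"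
      using K(2) by (simp add: exp_sum[symmetric] sum_subtractf fin)
    finally have P: "(\<Prod>j\<in>K. (ls + t) / (lam j + t)) = \<dots>" .
    have "(\<Prod>j\<in>R. 1 / (lam j + t)) = (\<Prod>j\<in>R. exp (- ln (lam j + t)))"
    proof (rule prod.cong)
      fix j assume "j \<in> R"
      then have "lam j + t > 0" using lj t by (force simp: R_def)
      then show "1 / (lam j + t) = exp (- ln (lam j + t))" by (simp add: exp_minus inverse_eq_divide)
    qed simp
    also have "\<dots> = exp (- (\<Sum>j\<in>R. ln (lam j + t)))"
      by (simp add: exp_sum[symmetric] sum_negf fin)
    finally have Q: "(\<Prod>j\<in>R. 1 / (lam j + t)) = \<dots>" .
    have S: "(\<Sum>j\<in>{1..p}. ln (lam j + t)) = (\<Sum>j\<in>K. ln (lam j + t)) + (\<Sum>j\<in>R. ln (lam j + t))"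
      using fin by (simp add: sum.union_disjoint)
    show ?thesis unfolding r_def P Q S by (simp add: exp_add[symmetric])
  qed
  have fr: "post_w p a b c lam t = r t * g t" if t: "t > 0" for t
  proof -
    have "(a - 1 + real p / 2) * ln t - (a + b) * ln (c + t) - (\<Sum>j\<in>{1..p}. ln (lam j + t))
      = (real k * ln (ls + t) - (\<Sum>j\<in>{1..p}. ln (lam j + t)))
        + ((real p / 2 + a - 1) * ln t - (a + b) * ln (c + t) - real k * ln (ls + t))"
      by (simp add: algebra_simps)
    then show ?thesis using t hc lam
      by (simp add: post_exp r_exp g_exp exp_add[symmetric])
  qed
  have rmono: "r t \<le> r s" if st: "0 < s" "s \<le> t" for s t
    unfolding r_def
  proof (intro mult_mono prod_mono conjI)
    fix j assume j: "j \<in> K"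
    then have "lam j \<le> ls" "lam j > 0" using lj K by auto
    then show "(ls + t) / (lam j + t) \<le> (ls + s) / (lam j + s)" "0 \<le> (ls + t) / (lam j + t)"
      using m3[OF st, of "lam j" ls] st lsp by auto
  next
    fix j assume j: "j \<in> R"
    then have "lam j > 0" using lj by (auto simp: R_def)
    then show "1 / (lam j + t) \<le> 1 / (lam j + s)" "0 \<le> 1 / (lam j + t)"
      using m4[OF st, of "lam j"] st by auto
  qed (use st lsp lj K(1) in \<open>auto intro!: prod_nonneg divide_nonneg_pos add_pos_pos simp: R_def subset_iff\<close>)
  have "condE p a b c lam (\<lambda>t. t / (\<gamma> + t)) \<le> wratio (\<lambda>t. t / (\<gamma> + t)) g"
    unfolding condE_def
  proof (rule mlr'[where r = r])
    show "post_w p a b c lam \<in> borel_measurable borel" unfolding post_w_def pi_tau_def by measurable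
    show "g \<in> borel_measurable borel" unfolding g_def by measurable
    show "(\<lambda>t. t / (\<gamma> + t)) \<in> borel_measurable borel" by measurable
    show "\<And>t. t > 0 \<Longrightarrow> g t > 0" using g_exp by simp
    show "\<And>t. t > 0 \<Longrightarrow> post_w p a b c lam t > 0" using post_pos hc lam by blast
    show "\<And>t. t > 0 \<Longrightarrow> post_w p a b c lam t = r t * g t" by (rule fr)
    show "\<And>t. t > 0 \<Longrightarrow> t / (\<gamma> + t) \<ge> 0" using gam by simp
    show "\<And>s t. s > 0 \<Longrightarrow> t > 0 \<Longrightarrow> r s < r t \<Longrightarrow> t / (\<gamma> + t) \<le> s / (\<gamma> + s)"
    proof -
      fix s t :: real assume h: "s > 0" "t > 0" "r s < r t"
      then have "t \<le> s" using rmono[of s t] by force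
      then show "t / (\<gamma> + t) \<le> s / (\<gamma> + s)" using m1[of t s \<gamma>] gam h by simp
    qed
    show "(\<integral>\<^sup>+t. ennreal (post_w p a b c lam t) * indicator {0<..} t \<partial>lborel) < \<infinity>"
      by (rule post_fin[OF ha hb hc lam])
    show "(\<integral>\<^sup>+t. ennreal (g t) * indicator {0<..} t \<partial>lborel) < \<infinity>"
    proof (rule int_fin[where \<alpha> = "real p / 2 + a" and \<beta> = "real k + b - real p / 2" and C = "exp (-(a + b) * ln c - real k * ln ls)" and Dc = 1])
      show "g \<in> borel_measurable borel" unfolding g_def by measurable
      show "real p / 2 + a > 0" "real k + b - real p / 2 > 0" "exp (-(a + b) * ln c - real k * ln ls) \<ge> 0" "(1::real) \<ge> 0"
        using ha hb kge by auto
    next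
      fix t :: real assume t: "0 < t" "t \<le> 1"
      have l2: "(a + b) * ln c \<le> (a + b) * ln (c + t)" using ha hb hc t by (intro mult_left_mono) auto
      have l3: "real k * ln ls \<le> real k * ln (ls + t)" using lsp t by (intro mult_left_mono) auto
      have "(real p / 2 + a - 1) * ln t - (a + b) * ln (c + t) - real k * ln (ls + t) \<le> (-(a + b) * ln c - real k * ln ls) + (real p / 2 + a - 1) * ln t"
        using l2 l3 by (simp add: algebra_simps)
      then show "g t \<le> exp (-(a + b) * ln c - real k * ln ls) * t powr (real p / 2 + a - 1)"
        using t by (simp add: g_exp powr_exp exp_add[symmetric])
    next
      fix t :: real assume t: "1 < t"
      have l2: "(a + b) * ln t \<le> (a + b) * ln (c + t)" using ha hb hc t by (intro mult_left_mono) auto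
      have l3: "real k * ln t \<le> real k * ln (ls + t)" using lsp t by (intro mult_left_mono) auto
      have "(real p / 2 + a - 1) * ln t - (a + b) * ln (c + t) - real k * ln (ls + t) \<le> (real p / 2 + a - 1) * ln t - (a + b) * ln t - real k * ln t"
        using l2 l3 by simp
      also have "\<dots> = (- (real k + b - real p / 2) - 1) * ln t" by (simp add: algebra_simps)
      finally show "g t \<le> 1 * t powr (- (real k + b - real p / 2) - 1)"
        using t by (simp add: g_exp powr_exp)
    qed
  qed
  then show ?thesis by (simp add: g_def ls_def k_def kk)
qed

lemma ediv_le:
  assumes "ennreal Zl \<le> Z" "Zl > 0"
  shows "x / Z \<le> x / ennreal Zl"
proof -
  have "inverse Z \<le> inverse (ennreal Zl)"
  proof (cases Z rule: ennreal_cases)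
    case (real z)
    then have "Zl \<le> z" using assms by simp
    then show ?thesis using real assms by (simp add: inverse_ennreal le_imp_inverse_le)
  next
    case top then show ?thesis by simp
  qed
  then show ?thesis by (simp add: divide_ennreal_def mult_left_mono)
qed

lemma part3:
  fixes p :: nat and a b c \<gamma> \<eta> :: real
  assumes hp: "p \<ge> 1" and ha: "a > 0" and hb: "b > 0" and hc: "c > 0"
    and hap: "a \<le> real p / 2"
    and hyp: "(even p \<longrightarrow> a \<notin> \<nat>) \<and> (odd p \<longrightarrow> (\<forall>n::nat. n \<ge> 1 \<longrightarrow> a \<noteq> real n - 1/2))"
    and gam: "\<gamma> > 0" and eta: "\<eta> > 0"
  shows "\<exists>\<delta>>0. \<forall>lam :: nat \<Rightarrow> real.
           (\<forall>k\<in>{1..p}. lam k > 0) \<and> ord_stat p lam (nat (kstar p a)) < \<delta> \<longrightarrow>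
           0 \<le> condE p a b c lam (\<lambda>t. t / (\<gamma> + t))
           \<and> condE p a b c lam (\<lambda>t. t / (\<gamma> + t)) < ennreal \<eta>"
proof -
  define k where "k = nat (kstar p a)"
  have kr: "kstar p a \<in> {1..int p}" by (rule kstar_range[OF hp ha hap])
  then have k1: "1 \<le> k" "k \<le> p" and kk: "real_of_int (kstar p a) = real k" by (auto simp: k_def)
  define \<alpha> where "\<alpha> = real p / 2 + a"
  define \<theta> where "\<theta> = \<alpha> - real k"
  have \<alpha>p: "\<alpha> > 0" using ha by (simp add: \<alpha>_def)
  have \<theta>n: "\<theta> < 0" using kstar_strict[OF hp ha hyp] kk by (simp add: \<theta>_def \<alpha>_def)
  have \<theta>l: "\<theta> > -1" using kstar_bounds(2)[OF hp ha] kk by (simp add: \<theta>_def \<alpha>_def)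
  define h where "h = (\<lambda>t::real. t / (\<gamma> + t))"
  define w where "w = (\<lambda>ls t::real. t powr (real p / 2 + a - 1) * (c + t) powr (-(a + b)) * (ls + t) powr (- real_of_int (kstar p a)))"
  have w_exp: "w ls t = exp ((\<alpha> - 1) * ln t - (a + b) * ln (c + t) - real k * ln (ls + t))" if "t > 0" "ls > 0" for ls t
    using that hc by (simp add: w_def kk \<alpha>_def powr_exp exp_add[symmetric] exp_diff[symmetric] algebra_simps)
  define m where "m = (\<lambda>t::real. h t * exp ((\<theta> - 1) * ln t - (a + b) * ln (c + t)))"
  have Mfin: "(\<integral>\<^sup>+t. ennreal (m t) * indicator {0<..} t \<partial>lborel) < \<infinity>"
  proof (rule int_fin[where \<alpha> = "\<theta> + 1" and \<beta> = "real k + b - real p / 2" and C = "exp (-(a + b) * ln c) / \<gamma>" and Dc = 1])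
    show "m \<in> borel_measurable borel" unfolding m_def h_def by measurable
    show "\<theta> + 1 > 0" "real k + b - real p / 2 > 0" "exp (-(a + b) * ln c) / \<gamma> \<ge> 0" "(1::real) \<ge> 0"
      using \<theta>l \<theta>n ha hb gam by (auto simp: \<theta>_def \<alpha>_def)
  next
    fix t :: real assume t: "0 < t" "t \<le> 1"
    have h1: "h t \<le> t / \<gamma>" using t gam by (simp add: h_def frac_le)
    have l2: "(a + b) * ln c \<le> (a + b) * ln (c + t)" using ha hb hc t by (intro mult_left_mono) auto
    have e1: "exp ((\<theta> - 1) * ln t - (a + b) * ln (c + t)) \<le> exp ((\<theta> - 1) * ln t - (a + b) * ln c)"
      using l2 by simp
    have "m t \<le> (t / \<gamma>) * exp ((\<theta> - 1) * ln t - (a + b) * ln c)"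
      unfolding m_def using h1 e1 t gam by (intro mult_mono) (auto simp: h_def)
    also have "\<dots> = exp (-(a + b) * ln c) / \<gamma> * t powr (\<theta> + 1 - 1)"
    proof -
      have "t * exp ((\<theta> - 1) * ln t - (a + b) * ln c) = exp (ln t) * exp ((\<theta> - 1) * ln t - (a + b) * ln c)"
        using t by simp
      also have "\<dots> = exp (ln t + ((\<theta> - 1) * ln t - (a + b) * ln c))" by (simp add: exp_add)
      also have "ln t + ((\<theta> - 1) * ln t - (a + b) * ln c) = -(a + b) * ln c + \<theta> * ln t" by (simp add: algebra_simps)
      finally have "t * exp ((\<theta> - 1) * ln t - (a + b) * ln c) = exp (-(a + b) * ln c) * exp (\<theta> * ln t)"
        by (simp add: exp_add)
      then show ?thesis using t by (simp add: powr_exp)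
    qed
    finally show "m t \<le> exp (-(a + b) * ln c) / \<gamma> * t powr (\<theta> + 1 - 1)" .
  next
    fix t :: real assume t: "1 < t"
    have h1: "h t \<le> 1" using t gam by (simp add: h_def)
    have l2: "(a + b) * ln t \<le> (a + b) * ln (c + t)" using ha hb hc t by (intro mult_left_mono) auto
    have e1: "exp ((\<theta> - 1) * ln t - (a + b) * ln (c + t)) \<le> exp ((- (real k + b - real p / 2) - 1) * ln t)"
    proof -
      have "(\<theta> - 1) * ln t - (a + b) * ln (c + t) \<le> (\<theta> - 1) * ln t - (a + b) * ln t" using l2 by simp
      also have "\<dots> = (- (real k + b - real p / 2) - 1) * ln t" by (simp add: \<theta>_def \<alpha>_def algebra_simps)
      finally show ?thesis by simp
    qed
    have "m t \<le> 1 * exp ((- (real k + b - real p / 2) - 1) * ln t)"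
      unfolding m_def using h1 e1 t gam by (intro mult_mono) (auto simp: h_def)
    then show "m t \<le> 1 * t powr (- (real k + b - real p / 2) - 1)" using t by (simp add: powr_exp)
  qed
  obtain Mr where Mr: "(\<integral>\<^sup>+t. ennreal (m t) * indicator {0<..} t \<partial>lborel) = ennreal Mr" "Mr \<ge> 0"
    using Mfin by (cases "(\<integral>\<^sup>+t. ennreal (m t) * indicator {0<..} t \<partial>lborel)" rule: ennreal_cases) auto
  define K0 where "K0 = exp (-(a + b) * ln (c + 1) - real k * ln 2) / \<alpha>"
  have K0p: "K0 > 0" using \<alpha>p by (simp add: K0_def)
  have Nbound: "(\<integral>\<^sup>+t. ennreal (h t * w ls t) * indicator {0<..} t \<partial>lborel) \<le> ennreal Mr" if ls: "ls > 0" for ls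
  proof -
    have "(\<integral>\<^sup>+t. ennreal (h t * w ls t) * indicator {0<..} t \<partial>lborel) \<le> (\<integral>\<^sup>+t. ennreal (m t) * indicator {0<..} t \<partial>lborel)"
    proof (intro nn_integral_mono)
      fix t :: real
      show "ennreal (h t * w ls t) * indicator {0<..} t \<le> ennreal (m t) * indicator {0<..} t"
      proof (cases "t > 0")
        case True
        have l3: "real k * ln t \<le> real k * ln (ls + t)" using ls True by (intro mult_left_mono) auto
        have "(\<alpha> - 1) * ln t - (a + b) * ln (c + t) - real k * ln (ls + t) \<le> (\<theta> - 1) * ln t - (a + b) * ln (c + t)"
          using l3 by (simp add: \<theta>_def algebra_simps)
        then have "w ls t \<le> exp ((\<theta> - 1) * ln t - (a + b) * ln (c + t))" using True ls by (simp add: w_exp)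
        then have "h t * w ls t \<le> m t" unfolding m_def using True gam by (intro mult_left_mono) (auto simp: h_def)
        then show ?thesis using True by (simp add: ennreal_leI)
      qed simp
    qed
    then show ?thesis using Mr by simp
  qed
  have Zbound: "ennreal (K0 * exp (\<theta> * ln ls)) \<le> (\<integral>\<^sup>+t. ennreal (w ls t) * indicator {0<..} t \<partial>lborel)"
    if ls: "ls > 0" "ls \<le> 1" for ls
  proof -
    define K1 where "K1 = exp (-(a + b) * ln (c + 1) - real k * ln (2 * ls))"
    have K1p: "K1 \<ge> 0" by (simp add: K1_def)
    have i1: "((\<lambda>t. K1 * t powr (\<alpha> - 1)) has_integral K1 * (ls powr (\<alpha> - 1 + 1) / (\<alpha> - 1 + 1))) {0..ls}"
      by (intro has_integral_mult_right has_integral_powr_from_0) (use \<alpha>p ls in auto)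
    have n1: "(\<integral>\<^sup>+t. ennreal (K1 * t powr (\<alpha> - 1)) * indicator {0..ls} t \<partial>lborel) = ennreal (K1 * (ls powr (\<alpha> - 1 + 1) / (\<alpha> - 1 + 1)))"
      by (rule nn_integral_has_integral_lebesgue'[OF _ i1]) (use K1p in auto)
    have eq: "K1 * (ls powr (\<alpha> - 1 + 1) / (\<alpha> - 1 + 1)) = K0 * exp (\<theta> * ln ls)"
    proof -
      have "K1 * ls powr \<alpha> = exp (-(a + b) * ln (c + 1) - real k * ln 2) * exp (\<theta> * ln ls)"
        using ls by (simp add: K1_def powr_exp exp_add[symmetric] ln_mult \<theta>_def algebra_simps)
      then show ?thesis by (simp add: K0_def)
    qed
    have "ennreal (K0 * exp (\<theta> * ln ls)) = (\<integral>\<^sup>+t. ennreal (K1 * t powr (\<alpha> - 1)) * indicator {0..ls} t \<partial>lborel)"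
      using n1 eq by simp
    also have "\<dots> \<le> (\<integral>\<^sup>+t. ennreal (w ls t) * indicator {0<..} t \<partial>lborel)"
    proof (intro nn_integral_mono)
      fix t :: real
      show "ennreal (K1 * t powr (\<alpha> - 1)) * indicator {0..ls} t \<le> ennreal (w ls t) * indicator {0<..} t"
      proof (cases "0 < t \<and> t \<le> ls")
        case True
        then have t: "0 < t" "t \<le> ls" by auto
        have l2: "(a + b) * ln (c + t) \<le> (a + b) * ln (c + 1)" using ha hb hc t ls by (intro mult_left_mono) auto
        have l3: "real k * ln (ls + t) \<le> real k * ln (2 * ls)" using ls t by (intro mult_left_mono) auto
        have "-(a + b) * ln (c + 1) - real k * ln (2 * ls) + (\<alpha> - 1) * ln t \<le> (\<alpha> - 1) * ln t - (a + b) * ln (c + t) - real k * ln (ls + t)"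
          using l2 l3 by (simp add: algebra_simps)
        then have "K1 * t powr (\<alpha> - 1) \<le> w ls t" using t ls by (simp add: K1_def w_exp powr_exp exp_add[symmetric])
        then show ?thesis using t by (simp add: ennreal_leI)
      next
        case False
        then show ?thesis by (cases "t = 0") (auto simp: indicator_def)
      qed
    qed
    finally show ?thesis .
  qed
  define Q where "Q = (Mr + 1) / (\<eta> * K0)"
  have Qp: "Q > 0" using Mr K0p eta by (simp add: Q_def)
  define \<delta> where "\<delta> = min 1 (exp (ln Q / \<theta>))"
  have key: "wratio h (w ls) < ennreal \<eta>" if ls: "ls > 0" "ls < \<delta>" for ls
  proof -
    have ls1: "ls \<le> 1" using ls by (simp add: \<delta>_def)
    have "ls < exp (ln Q / \<theta>)" using ls by (simp add: \<delta>_def)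
    then have "ln ls < ln (exp (ln Q / \<theta>))" using ls(1) by (subst ln_less_cancel_iff) auto
    then have "ln ls < ln Q / \<theta>" by simp
    then have "ln Q < ln ls * \<theta>" using \<theta>n by (auto simp: less_divide_eq)
    then have "\<theta> * ln ls > ln Q" by (simp add: mult.commute)
    then have "exp (\<theta> * ln ls) > Q" using Qp by (metis exp_less_cancel_iff exp_ln)
    then have "\<eta> * K0 * exp (\<theta> * ln ls) > \<eta> * K0 * Q" using eta K0p by simp
    also have "\<eta> * K0 * Q = Mr + 1" using eta K0p by (simp add: Q_def)
    finally have big: "Mr < \<eta> * (K0 * exp (\<theta> * ln ls))" by (simp add: mult.assoc)
    have Zlp: "K0 * exp (\<theta> * ln ls) > 0" using K0p by simp
    have "wratio h (w ls) \<le> ennreal Mr / (\<integral>\<^sup>+t. ennreal (w ls t) * indicator {0<..} t \<partial>lborel)"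
      unfolding wratio_def by (rule divide_right_mono_ennreal[OF Nbound[OF ls(1)]])
    also have "\<dots> \<le> ennreal Mr / ennreal (K0 * exp (\<theta> * ln ls))"
      by (rule ediv_le[OF Zbound[OF ls(1) ls1] Zlp])
    also have "\<dots> = ennreal (Mr / (K0 * exp (\<theta> * ln ls)))" using Mr Zlp by (simp add: divide_ennreal)
    also have "\<dots> < ennreal \<eta>"
      using big Zlp Mr eta by (intro ennreal_lessI) (auto simp: divide_less_eq mult.commute)
    finally show ?thesis .
  qed
  have \<delta>p: "\<delta> > 0" by (simp add: \<delta>_def)
  show ?thesis
  proof (intro exI[of _ \<delta>] conjI \<delta>p allI impI)
    fix lam :: "nat \<Rightarrow> real"
    assume H: "(\<forall>k\<in>{1..p}. lam k > 0) \<and> ord_stat p lam (nat (kstar p a)) < \<delta>"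
    show "0 \<le> condE p a b c lam (\<lambda>t. t / (\<gamma> + t))" by simp
    have lsp: "ord_stat p lam (nat (kstar p a)) > 0" using ordstat(3)[OF k1] H by (simp add: k_def)
    have "condE p a b c lam (\<lambda>t. t / (\<gamma> + t)) \<le> wratio h (w (ord_stat p lam (nat (kstar p a))))"
      using part2[OF hp ha hb hc hap gam, of lam] H unfolding h_def w_def by simp
    also have "\<dots> < ennreal \<eta>" using key lsp H by blast
    finally show "condE p a b c lam (\<lambda>t. t / (\<gamma> + t)) < ennreal \<eta>" .
  qed
qed

theorem mainTheorem9:
  fixes p :: nat and a b c :: real
  assumes hp: "p \<ge> 1" and ha: "a > 0" and hb: "b > 0" and hc: "c > 0"
    and hap: "a \<le> real p / 2"
  shows "kstar p a \<in> {1..int p}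
    \<and> (\<forall>\<epsilon>>0. \<forall>lam :: nat \<Rightarrow> real. (\<forall>k\<in>{1..p}. lam k > 0) \<longrightarrow>
          (let ls = ord_stat p lam (nat (kstar p a)); A = Astar p a in
           condE p a b c lam (\<lambda>t. t powr (-\<epsilon>))
             \<le> wratio (\<lambda>t. t powr (-\<epsilon>))
                 (\<lambda>t. t powr (A - 1) * (c + t) powr (-(a + b))
                      * (ls + t) powr (-(A + real p / 2 - a)))))
    \<and> (\<forall>\<gamma>>0. \<forall>lam :: nat \<Rightarrow> real. (\<forall>k\<in>{1..p}. lam k > 0) \<longrightarrow>
          (let ls = ord_stat p lam (nat (kstar p a)); B = real_of_int (kstar p a) in
           condE p a b c lam (\<lambda>t. t / (\<gamma> + t))
             \<le> wratio (\<lambda>t. t / (\<gamma> + t))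
                 (\<lambda>t. t powr (real p / 2 + a - 1) * (c + t) powr (-(a + b))
                      * (ls + t) powr (-B))))
    \<and> (((even p \<longrightarrow> a \<notin> \<nat>) \<and> (odd p \<longrightarrow> (\<forall>n::nat. n \<ge> 1 \<longrightarrow> a \<noteq> real n - 1/2))) \<longrightarrow>
        (\<forall>\<gamma>>0. \<forall>\<eta>>0. \<exists>\<delta>>0. \<forall>lam :: nat \<Rightarrow> real.
           (\<forall>k\<in>{1..p}. lam k > 0) \<and> ord_stat p lam (nat (kstar p a)) < \<delta> \<longrightarrow>
           0 \<le> condE p a b c lam (\<lambda>t. t / (\<gamma> + t))
           \<and> condE p a b c lam (\<lambda>t. t / (\<gamma> + t)) < ennreal \<eta>))"
  proof -
  show ?thesis
    unfolding Let_def
  proof (intro conjI allI impI)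
    show "kstar p a \<in> {1..int p}" by (rule kstar_range[OF hp ha hap])
  next
    fix \<epsilon> :: real and lam :: "nat \<Rightarrow> real"
    assume "\<epsilon> > 0" "\<forall>k\<in>{1..p}. lam k > 0"
    then show "condE p a b c lam (\<lambda>t. t powr (-\<epsilon>))
             \<le> wratio (\<lambda>t. t powr (-\<epsilon>))
                 (\<lambda>t. t powr (Astar p a - 1) * (c + t) powr (-(a + b))
                      * (ord_stat p lam (nat (kstar p a)) + t) powr (-(Astar p a + real p / 2 - a)))"
      by (rule part1[OF hp ha hb hc hap])
  next
    fix \<gamma> :: real and lam :: "nat \<Rightarrow> real"
    assume "\<gamma> > 0" "\<forall>k\<in>{1..p}. lam k > 0"
    then show "condE p a b c lam (\<lambda>t. t / (\<gamma> + t))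
             \<le> wratio (\<lambda>t. t / (\<gamma> + t))
                 (\<lambda>t. t powr (real p / 2 + a - 1) * (c + t) powr (-(a + b))
                      * (ord_stat p lam (nat (kstar p a)) + t) powr (- real_of_int (kstar p a)))"
      by (rule part2[OF hp ha hb hc hap])
  next
    fix \<gamma> \<eta> :: real
    assume "(even p \<longrightarrow> a \<notin> \<nat>) \<and> (odd p \<longrightarrow> (\<forall>n::nat. n \<ge> 1 \<longrightarrow> a \<noteq> real n - 1/2))"
      "\<gamma> > 0" "\<eta> > 0"
    then show "\<exists>\<delta>>0. \<forall>lam :: nat \<Rightarrow> real.
           (\<forall>k\<in>{1..p}. lam k > 0) \<and> ord_stat p lam (nat (kstar p a)) < \<delta> \<longrightarrow>
           0 \<le> condE p a b c lam (\<lambda>t. t / (\<gamma> + t))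
           \<and> condE p a b c lam (\<lambda>t. t / (\<gamma> + t)) < ennreal \<eta>"
      by (rule part3[OF hp ha hb hc hap])
  qed
qed

end
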